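(* Let $C,\beta>0$ and $N,M\in\mathbb{N}$. Let $H$ be a Hilbert space of dimension $M$, and let $(x_j)_{j=1}^N$ and $(f_j)_{j=1}^N$ be sequences in $H$ satisfying $\|x_j\|=\|f_j\|$ for all $1\leq j\leq N$ and $$\Big\|\sum_{j=1}^N \varepsilon_j\langle x, f_j\rangle x_j\Big\|\leq C\|x\| \qquad\text{for all } x\in H \text{ and all scalars } \varepsilon_j \text{ with } |\varepsilon_j|=1.$$ If the frame operator of $(f_j)_{j=1}^N$ has eigenvalues $\lambda_1\geq\dots\geq\lambda_M$ satisfying $\lambda_1\leq \frac{\beta}{M}\sum_{j=1}^M\lambda_j$, then $(f_j)_{j=1}^N$ has Bessel bound $\frac{27}{4}K_1^{-4}\beta^2 C$. In particular, if $(f_j)_{j=1}^N$ is a frame with condition number $\beta$ then $(f_j)_{j=1}^N$ has Bessel bound $\frac{27}{4}K_1^{-4}\beta^2 C$, and if $(f_j)_{j=1}^N$ is a tight frame then $(f_j)_{j=1}^N$ has Bessel bound $\frac{27}{4}K_1^{-4}C$. Likewise, if the frame operator of $(x_j)_{j=1}^N$ has eigenvalues $\lambda_1\geq\dots\geq\lambda_M$ satisfying $\lambda_1\leq\frac{\beta}{M}\sum_{j=1}^M\lambda_j$, then $(x_j)_{j=1}^N$ has Bessel bound $\frac{27}{4}K_1^{-4}\beta^2 C$.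
   Context: A sequence $(y_j)_{j=1}^N$ in a Hilbert space $H$ has Bessel bound $B$ if $\sum_{j=1}^N|\langle x,y_j\rangle|^2\leq B\|x\|^2$ for all $x\in H$; it is a frame if additionally there is $A>0$ with $A\|x\|^2\leq\sum_j|\langle x,y_j\rangle|^2$ for all $x$; the condition number is the ratio $B/A$ of optimal bounds, and the frame is tight if the condition number is $1$. The frame operator of $(y_j)$ is $S(x)=\sum_{j}\langle x,y_j\rangle y_j$. $K_1>0$ denotes the constant in Khintchine's inequality: for all $N\in\mathbb{N}$ and all scalars $(a_j)_{j=1}^N$, $2^{-N}\sum_{\delta_j=\pm1}\big|\sum_{j=1}^N\delta_j a_j\big|\geq K_1\big(\sum_{j=1}^N|a_j|^2\big)^{1/2}$. *)

theory Defs
  imports "HOL-Analysis.Analysis"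
begin

text \<open>A Hilbert space of dimension M over the scalar field K (K = the reals or K = the
complex numbers) is modelled as the K-vectors inside complex^'n with CARD('n) = M.
For K = reals this is (isometrically) real Euclidean M-space, for K = complex it is
unitary M-space; every M-dimensional Hilbert space is isometric to one of these.\<close>

definition cinner :: "complex^'n \<Rightarrow> complex^'n \<Rightarrow> complex" where
  "cinner x y = (\<Sum>i\<in>UNIV. x$i * cnj (y$i))"

definition vecs :: "complex set \<Rightarrow> (complex^'n) set" where
  "vecs K = {x. \<forall>i. x$i \<in> K}"

definition frame_sum :: "(nat \<Rightarrow> complex^'n) \<Rightarrow> nat \<Rightarrow> complex^'n \<Rightarrow> real" where
  "frame_sum f N x = (\<Sum>j<N. (cmod (cinner x (f j)))^2)"

definition bessel_bound :: "complex set \<Rightarrow> (nat \<Rightarrow> complex^'n) \<Rightarrow> nat \<Rightarrow> real \<Rightarrow> bool" where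
  "bessel_bound K f N B \<longleftrightarrow> (\<forall>x\<in>vecs K. frame_sum f N x \<le> B * (norm x)^2)"

definition is_frame :: "complex set \<Rightarrow> (nat \<Rightarrow> complex^'n) \<Rightarrow> nat \<Rightarrow> bool" where
  "is_frame K f N \<longleftrightarrow> (\<exists>A>0. \<exists>B. \<forall>x\<in>vecs K.
      A * (norm x)^2 \<le> frame_sum f N x \<and> frame_sum f N x \<le> B * (norm x)^2)"

definition opt_upper_bound :: "complex set \<Rightarrow> (nat \<Rightarrow> complex^'n) \<Rightarrow> nat \<Rightarrow> real" where
  "opt_upper_bound K f N = Sup {frame_sum f N x | x. x \<in> vecs K \<and> norm x = 1}"

definition opt_lower_bound :: "complex set \<Rightarrow> (nat \<Rightarrow> complex^'n) \<Rightarrow> nat \<Rightarrow> real" where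
  "opt_lower_bound K f N = Inf {frame_sum f N x | x. x \<in> vecs K \<and> norm x = 1}"

definition condition_number :: "complex set \<Rightarrow> (nat \<Rightarrow> complex^'n) \<Rightarrow> nat \<Rightarrow> real" where
  "condition_number K f N = opt_upper_bound K f N / opt_lower_bound K f N"

definition tight_frame :: "complex set \<Rightarrow> (nat \<Rightarrow> complex^'n) \<Rightarrow> nat \<Rightarrow> bool" where
  "tight_frame K f N \<longleftrightarrow> is_frame K f N \<and> condition_number K f N = 1"

definition frame_op :: "(nat \<Rightarrow> complex^'n) \<Rightarrow> nat \<Rightarrow> complex^'n \<Rightarrow> complex^'n" where
  "frame_op f N x = (\<Sum>j<N. cinner x (f j) *s f j)"

definition has_ordered_eigenvalues ::
  "complex set \<Rightarrow> (complex^'n \<Rightarrow> complex^'n) \<Rightarrow> nat \<Rightarrow> (nat \<Rightarrow> real) \<Rightarrow> bool" where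
  "has_ordered_eigenvalues K S M lam \<longleftrightarrow>
     (\<exists>e. (\<forall>i<M. e i \<in> vecs K) \<and>
          (\<forall>i<M. \<forall>k<M. cinner (e i) (e k) = (if i = k then 1 else 0)) \<and>
          (\<forall>i<M. S (e i) = complex_of_real (lam i) *s e i) \<and>
          (\<forall>i k. i \<le> k \<longrightarrow> k < M \<longrightarrow> lam k \<le> lam i))"

definition khintchine_const :: "complex set \<Rightarrow> real \<Rightarrow> bool" where
  "khintchine_const K K1 \<longleftrightarrow> K1 > 0 \<and>
     (\<forall>(n::nat) (a::nat \<Rightarrow> complex). (\<forall>j<n. a j \<in> K) \<longrightarrow>
        (1 / 2^n) * (\<Sum>\<delta>\<in>PiE {..<n} (\<lambda>_. {-1, 1::real}). cmod (\<Sum>j<n. of_real (\<delta> j) * a j))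
          \<ge> K1 * sqrt (\<Sum>j<n. (cmod (a j))^2))"

end

theory Submission
  imports Defs
begin

lemma cinner_sum_left: "finite A \<Longrightarrow> cinner (\<Sum>j\<in>A. g j) y = (\<Sum>j\<in>A. cinner (g j) y)"
  by (induction A rule: finite_induct) (auto simp: cinner_def sum.distrib algebra_simps)

lemma cinner_scale_left: "cinner (c *s x) y = c * cinner x y"
  by (simp add: cinner_def sum_distrib_left mult.assoc)

lemma cinner_commute: "cinner y x = cnj (cinner x y)"
  by (simp add: cinner_def mult.commute)

lemma norm_sq: "(norm (x::complex^'n))^2 = (\<Sum>i\<in>UNIV. (cmod (x$i))^2)"
  unfolding norm_vec_def L2_set_def by (simp add: sum_nonneg)

lemma cinner_self: "cinner x x = of_real ((norm x)^2)"
  unfolding norm_sq cinner_def of_real_sum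
  by (rule sum.cong) (auto simp: complex_norm_square[symmetric])

lemma cauchy: "cmod (cinner x y) \<le> norm x * norm y"
proof -
  have "cmod (cinner x y) \<le> (\<Sum>i\<in>UNIV. cmod (x$i) * cmod (y$i))"
    unfolding cinner_def by (rule order_trans[OF norm_sum]) (simp add: norm_mult)
  also have "\<dots> \<le> L2_set (\<lambda>i. cmod (x$i)) UNIV * L2_set (\<lambda>i. cmod (y$i)) UNIV"
    using L2_set_mult_ineq[of "\<lambda>i. cmod (x$i)" "\<lambda>i. cmod (y$i)" UNIV] by simp
  finally show ?thesis by (simp add: norm_vec_def)
qed

lemma complete:
  fixes e :: "nat \<Rightarrow> complex^'n"
  assumes dim: "CARD('n) = M"
    and on: "\<forall>i<M. \<forall>k<M. cinner (e i) (e k) = (if i = k then 1 else 0)"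
  shows "(\<Sum>i<M. cnj (e i $ b) * e i $ d) = (if b = d then 1 else 0)"
proof -
  obtain h where h: "bij_betw h {0..<M} (UNIV::'n set)"
    using ex_bij_betw_nat_finite[of "UNIV::'n set"] dim by auto
  define h' where "h' = inv_into {0..<M} h"
  have h'b: "bij_betw h' UNIV {0..<M}" using h bij_betw_inv_into h'_def by blast
  have hh': "h (h' a) = a" for a using h h'_def by (meson UNIV_I bij_betw_inv_into_right)
  define U :: "complex^'n^'n" where "U = (\<chi> a b. e (h' a) $ b)"
  define V :: "complex^'n^'n" where "V = (\<chi> b a. cnj (U$a$b))"
  have "U ** V = mat 1"
  proof -
    have "(U ** V)$a$c = mat 1 $a$c" for a c
    proof -
      have "(U ** V)$a$c = cinner (e (h' a)) (e (h' c))"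
        by (simp add: matrix_matrix_mult_def U_def V_def cinner_def)
      also have "\<dots> = (if h' a = h' c then 1 else 0)"
      proof -
        have "h' a < M" "h' c < M" using h'b by (auto simp: bij_betw_def)
        thus ?thesis using on by auto
      qed
      also have "\<dots> = mat 1 $a$c"
        using hh' by (auto simp: mat_def) (metis)
      finally show ?thesis .
    qed
    then show ?thesis by (simp add: vec_eq_iff)
  qed
  hence "V ** U = mat 1" using matrix_left_right_inverse by blast
  hence "(V ** U)$b$d = (if b = d then 1 else 0)" by (simp add: mat_def)
  hence "(\<Sum>a\<in>UNIV. cnj (e (h' a) $ b) * e (h' a) $ d) = (if b = d then 1 else 0)"
    by (simp add: matrix_matrix_mult_def U_def V_def)
  moreover have "(\<Sum>a\<in>UNIV. cnj (e (h' a) $ b) * e (h' a) $ d) = (\<Sum>i\<in>{0..<M}. cnj (e i $ b) * e i $ d)"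
    using sum.reindex_bij_betw[OF h'b, of "\<lambda>i. cnj (e i $ b) * e i $ d"] by simp
  ultimately show ?thesis by (simp add: atLeast0LessThan)
qed

lemma parseval:
  fixes e :: "nat \<Rightarrow> complex^'n"
  assumes dim: "CARD('n) = M"
    and on: "\<forall>i<M. \<forall>k<M. cinner (e i) (e k) = (if i = k then 1 else 0)"
  shows "cinner x y = (\<Sum>i<M. cinner x (e i) * cinner (e i) y)"
proof -
  have "(\<Sum>i<M. cinner x (e i) * cinner (e i) y)
      = (\<Sum>i<M. \<Sum>b\<in>UNIV. \<Sum>d\<in>UNIV. x$b * cnj (y$d) * (cnj (e i$b) * e i$d))"
    unfolding cinner_def sum_product by (intro sum.cong refl) (simp add: mult_ac)
  also have "\<dots> = (\<Sum>b\<in>UNIV. \<Sum>i<M. \<Sum>d\<in>UNIV. x$b * cnj (y$d) * (cnj (e i$b) * e i$d))"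
    by (rule sum.swap)
  also have "\<dots> = (\<Sum>b\<in>UNIV. \<Sum>d\<in>UNIV. \<Sum>i<M. x$b * cnj (y$d) * (cnj (e i$b) * e i$d))"
    by (intro sum.cong refl) (rule sum.swap)
  also have "\<dots> = (\<Sum>b\<in>UNIV. \<Sum>d\<in>UNIV. x$b * cnj (y$d) * (if b = d then 1 else 0))"
    by (simp add: sum_distrib_left[symmetric] complete[OF dim on])
  also have "\<dots> = cinner x y" unfolding cinner_def
    by (intro sum.cong refl) (simp add: if_distrib cong: if_cong)
  finally show ?thesis by simp
qed

lemma cmod_sq_cinner: "of_real ((cmod (cinner x y))^2) = cinner x y * cinner y x"
  by (metis cinner_commute complex_norm_square)

lemma eig_sum:
  fixes e g :: "nat \<Rightarrow> complex^'n"
  assumes dim: "CARD('n) = M"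
    and on: "\<forall>i<M. \<forall>k<M. cinner (e i) (e k) = (if i = k then 1 else 0)"
    and eig: "\<forall>i<M. frame_op g N (e i) = complex_of_real (lam i) *s e i"
  shows "frame_sum g N x = (\<Sum>i<M. lam i * (cmod (cinner x (e i)))^2)"
proof -
  have Se: "cinner (frame_op g N (e i)) z = (\<Sum>j<N. cinner (e i) (g j) * cinner (g j) z)" for i z
    unfolding frame_op_def by (simp add: cinner_sum_left cinner_scale_left)
  have "complex_of_real (frame_sum g N x) = (\<Sum>j<N. cinner x (g j) * cinner (g j) x)"
    unfolding frame_sum_def of_real_sum by (intro sum.cong refl) (rule cmod_sq_cinner)
  also have "\<dots> = (\<Sum>j<N. (\<Sum>i<M. cinner x (e i) * cinner (e i) (g j)) * cinner (g j) x)"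
    by (intro sum.cong refl) (simp add: parseval[OF dim on, of x "g _"])
  also have "\<dots> = (\<Sum>i<M. cinner x (e i) * (\<Sum>j<N. cinner (e i) (g j) * cinner (g j) x))"
    apply (simp add: sum_distrib_left sum_distrib_right)
    apply (subst sum.swap)
    apply (intro sum.cong refl)
    apply (simp add: mult_ac)
    done
  also have "\<dots> = (\<Sum>i<M. cinner x (e i) * cinner (frame_op g N (e i)) x)"
    by (simp add: Se)
  also have "\<dots> = (\<Sum>i<M. cinner x (e i) * (of_real (lam i) * cinner (e i) x))"
    using eig by (simp add: cinner_scale_left)
  also have "\<dots> = complex_of_real (\<Sum>i<M. lam i * (cmod (cinner x (e i)))^2)"
    unfolding of_real_sum of_real_mult cmod_sq_cinner by (intro sum.cong refl) (simp add: mult_ac)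
  finally show ?thesis using of_real_eq_iff by blast
qed

lemma eig_trace:
  fixes e g :: "nat \<Rightarrow> complex^'n"
  assumes dim: "CARD('n) = M"
    and on: "\<forall>i<M. \<forall>k<M. cinner (e i) (e k) = (if i = k then 1 else 0)"
    and eig: "\<forall>i<M. frame_op g N (e i) = complex_of_real (lam i) *s e i"
  shows "(\<Sum>i<M. lam i) = (\<Sum>j<N. (norm (g j))^2)"
proof -
  have Se: "cinner (frame_op g N (e i)) z = (\<Sum>j<N. cinner (e i) (g j) * cinner (g j) z)" for i z
    unfolding frame_op_def by (simp add: cinner_sum_left cinner_scale_left)
  have "complex_of_real (\<Sum>i<M. lam i) = (\<Sum>i<M. of_real (lam i) * cinner (e i) (e i))"
    unfolding of_real_sum using on by simp
  also have "\<dots> = (\<Sum>i<M. cinner (frame_op g N (e i)) (e i))"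
    using eig by (simp add: cinner_scale_left)
  also have "\<dots> = (\<Sum>j<N. \<Sum>i<M. cinner (g j) (e i) * cinner (e i) (g j))"
    apply (simp add: Se)
    apply (subst sum.swap)
    apply (intro sum.cong refl)
    apply (simp add: mult_ac)
    done
  also have "\<dots> = (\<Sum>j<N. cinner (g j) (g j))"
    by (intro sum.cong refl) (simp add: parseval[OF dim on, of "g _" "g _"])
  also have "\<dots> = complex_of_real (\<Sum>j<N. (norm (g j))^2)"
    by (simp add: cinner_self)
  finally show ?thesis using of_real_eq_iff by blast
qed

lemma K_cnj: "K = \<real> \<or> K = UNIV \<Longrightarrow> z \<in> K \<Longrightarrow> cnj z \<in> K"
  by (auto simp: Reals_cnj_iff)

lemma K_real: "K = \<real> \<or> K = UNIV \<Longrightarrow> complex_of_real r \<in> K"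
  by auto

definition vv :: "(nat \<Rightarrow> 'n) \<Rightarrow> nat \<Rightarrow> (nat \<Rightarrow> real) \<Rightarrow> complex^'n" where
  "vv h M \<delta> = (\<chi> b. complex_of_real (\<delta> (inv_into {..<M} h b) / sqrt M))"

lemma vv_in: "K = \<real> \<or> K = UNIV \<Longrightarrow> vv (h::nat \<Rightarrow> 'n::finite) M \<delta> \<in> vecs K"
  by (auto simp: vv_def vecs_def)

lemma vv_norm:
  assumes dim: "CARD('n) = M" and h: "bij_betw (h::nat \<Rightarrow> 'n::finite) {..<M} UNIV"
    and d: "\<delta> \<in> PiE {..<M} (\<lambda>_. {-1, 1::real})"
  shows "norm (vv h M \<delta>) = 1"
proof -
  have M: "M > 0" using dim finite_UNIV_card_ge_0 by fastforce
  have "(norm (vv h M \<delta>))^2 = (\<Sum>b\<in>(UNIV::'n set). 1 / real M)"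
    unfolding norm_sq
  proof (intro sum.cong refl)
    fix b :: 'n
    have "inv_into {..<M} h b \<in> {..<M}" using h by (metis bij_betw_imp_surj_on inv_into_into UNIV_I)
    hence "\<delta> (inv_into {..<M} h b) \<in> {-1,1}" using d by auto
    hence "(\<delta> (inv_into {..<M} h b))^2 = 1" by auto
    thus "(cmod (vv h M \<delta> $ b))^2 = 1 / real M"
      using M by (simp add: vv_def power_divide abs_real_def norm_divide)
  qed
  also have "\<dots> = 1" using dim M by simp
  finally show ?thesis using norm_ge_zero[of "vv h M \<delta>"] by (simp add: power2_eq_1_iff)
qed

lemma avg:
  assumes field: "K = \<real> \<or> K = UNIV" and K1: "khintchine_const K K1"
    and dim: "CARD('n) = M" and h: "bij_betw (h::nat \<Rightarrow> 'n::finite) {..<M} UNIV"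
    and z: "(z::complex^'n) \<in> vecs K"
  shows "K1 * norm z / sqrt M \<le> (1/2^M) * (\<Sum>\<delta>\<in>PiE {..<M} (\<lambda>_. {-1, 1::real}). cmod (cinner (vv h M \<delta>) z))"
proof -
  define a where "a k = cnj (z $ h k)" for k
  have aK: "\<forall>k<M. a k \<in> K" using z field K_cnj by (auto simp: a_def vecs_def)
  have kh: "(1 / 2^M) * (\<Sum>\<delta>\<in>PiE {..<M} (\<lambda>_. {-1, 1::real}). cmod (\<Sum>k<M. of_real (\<delta> k) * a k))
          \<ge> K1 * sqrt (\<Sum>k<M. (cmod (a k))^2)"
    using K1 aK unfolding khintchine_const_def by blast
  have "(\<Sum>k<M. (cmod (a k))^2) = (\<Sum>b\<in>UNIV. (cmod (z$b))^2)"
    using sum.reindex_bij_betw[OF h, of "\<lambda>b. (cmod (z$b))^2"] by (simp add: a_def)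
  hence sq: "sqrt (\<Sum>k<M. (cmod (a k))^2) = norm z" by (simp add: norm_sq[symmetric])
  have ci: "cinner (vv h M \<delta>) z = of_real (1 / sqrt M) * (\<Sum>k<M. of_real (\<delta> k) * a k)" for \<delta>
  proof -
    have "cinner (vv h M \<delta>) z = (\<Sum>b\<in>UNIV. complex_of_real (\<delta> (inv_into {..<M} h b) / sqrt M) * cnj (z$b))"
      by (simp add: cinner_def vv_def)
    also have "\<dots> = (\<Sum>k\<in>{..<M}. complex_of_real (\<delta> (inv_into {..<M} h (h k)) / sqrt M) * cnj (z$ h k))"
      using sum.reindex_bij_betw[OF h, of "\<lambda>b. complex_of_real (\<delta> (inv_into {..<M} h b) / sqrt M) * cnj (z$b)"] by simp
    also have "\<dots> = (\<Sum>k\<in>{..<M}. of_real (1 / sqrt M) * (of_real (\<delta> k) * a k))"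
    proof (intro sum.cong refl)
      fix k assume "k \<in> {..<M}"
      hence "inv_into {..<M} h (h k) = k" using h by (meson bij_betw_inv_into_left)
      thus "complex_of_real (\<delta> (inv_into {..<M} h (h k)) / sqrt M) * cnj (z$ h k) = of_real (1 / sqrt M) * (of_real (\<delta> k) * a k)"
        by (simp add: a_def)
    qed
    finally show ?thesis by (simp add: sum_distrib_left)
  qed
  have "(1/2^M) * (\<Sum>\<delta>\<in>PiE {..<M} (\<lambda>_. {-1, 1::real}). cmod (cinner (vv h M \<delta>) z))
      = (1 / sqrt M) * ((1 / 2^M) * (\<Sum>\<delta>\<in>PiE {..<M} (\<lambda>_. {-1, 1::real}). cmod (\<Sum>k<M. of_real (\<delta> k) * a k)))"
  proof -
    have "cmod (cinner (vv h M \<delta>) z) = (1 / sqrt M) * cmod (\<Sum>k<M. of_real (\<delta> k) * a k)" for \<delta>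
      unfolding ci norm_mult by (simp add: norm_divide)
    thus ?thesis by (simp add: sum_divide_distrib[symmetric])
  qed
  also have "\<dots> \<ge> (1 / sqrt M) * (K1 * norm z)"
    using kh sq by (intro mult_left_mono) auto
  finally show ?thesis by simp
qed

lemma cinner_real: "u \<in> vecs \<real> \<Longrightarrow> v \<in> vecs \<real> \<Longrightarrow> cinner u v \<in> \<real>"
  unfolding cinner_def vecs_def
  by (intro sum_in_Reals) (auto intro!: Reals_mult simp: Reals_cnj_iff)

lemma align:
  fixes xs f :: "nat \<Rightarrow> complex^'n"
  assumes field: "K = \<real> \<or> K = UNIV"
    and xs_in: "\<forall>j<N. xs j \<in> vecs K" and f_in: "\<forall>j<N. f j \<in> vecs K"
    and hyp: "\<forall>x\<in>vecs K. \<forall>\<epsilon>::nat \<Rightarrow> complex. (\<forall>j<N. \<epsilon> j \<in> K \<and> cmod (\<epsilon> j) = 1) \<longrightarrow>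
               norm (\<Sum>j<N. (\<epsilon> j * cinner x (f j)) *s xs j) \<le> C * norm x"
    and x: "x \<in> vecs K" and y: "y \<in> vecs K" and nx: "norm x = 1" and ny: "norm y = 1"
  shows "(\<Sum>j<N. cmod (cinner x (f j)) * cmod (cinner (xs j) y)) \<le> C"
proof -
  define w where "w j = cinner x (f j) * cinner (xs j) y" for j
  define \<epsilon> where "\<epsilon> j = (if w j = 0 then 1 else cnj (w j) / of_real (cmod (w j)))" for j
  have epsK: "\<epsilon> j \<in> K \<and> cmod (\<epsilon> j) = 1" if "j < N" for j
  proof
    show "cmod (\<epsilon> j) = 1" by (simp add: \<epsilon>_def norm_divide)
    show "\<epsilon> j \<in> K"
    proof (cases "K = \<real>")
      case True
      hence "w j \<in> \<real>" unfolding w_def using x y xs_in f_in that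
        by (intro Reals_mult cinner_real) auto
      hence "cnj (w j) \<in> \<real>" by (simp add: Reals_cnj_iff)
      thus ?thesis using True by (auto simp: \<epsilon>_def)
    next
      case False thus ?thesis using field by auto
    qed
  qed
  have ew: "\<epsilon> j * w j = of_real (cmod (w j))" for j
    by (cases "w j = 0") (auto simp: \<epsilon>_def complex_norm_square[symmetric] power2_eq_square mult.commute)
  have "cinner (\<Sum>j<N. (\<epsilon> j * cinner x (f j)) *s xs j) y = (\<Sum>j<N. \<epsilon> j * w j)"
    by (simp add: cinner_sum_left cinner_scale_left w_def mult.assoc)
  also have "\<dots> = of_real (\<Sum>j<N. cmod (w j))" by (simp add: ew)
  finally have "cmod (cinner (\<Sum>j<N. (\<epsilon> j * cinner x (f j)) *s xs j) y) = (\<Sum>j<N. cmod (w j))"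
    by (simp only: norm_of_real) (simp add: sum_nonneg)
  hence "(\<Sum>j<N. cmod (w j)) = cmod (cinner (\<Sum>j<N. (\<epsilon> j * cinner x (f j)) *s xs j) y)" by simp
  also have "\<dots> \<le> norm (\<Sum>j<N. (\<epsilon> j * cinner x (f j)) *s xs j) * norm y" by (rule cauchy)
  also have "\<dots> \<le> C" using hyp x epsK nx ny by auto
  finally show ?thesis by (simp add: w_def norm_mult)
qed

lemma key:
  fixes xs f :: "nat \<Rightarrow> complex^'n"
  assumes field: "K = \<real> \<or> K = UNIV" and K1: "khintchine_const K K1"
    and dim: "CARD('n) = M"
    and xs_in: "\<forall>j<N. xs j \<in> vecs K" and f_in: "\<forall>j<N. f j \<in> vecs K"
    and hyp: "\<forall>x\<in>vecs K. \<forall>\<epsilon>::nat \<Rightarrow> complex. (\<forall>j<N. \<epsilon> j \<in> K \<and> cmod (\<epsilon> j) = 1) \<longrightarrow>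
               norm (\<Sum>j<N. (\<epsilon> j * cinner x (f j)) *s xs j) \<le> C * norm x"
  shows "K1^2 * (\<Sum>j<N. norm (f j) * norm (xs j)) \<le> real M * C"
proof -
  have M: "M > 0" using dim finite_UNIV_card_ge_0 by fastforce
  have K1pos: "K1 > 0" using K1 by (simp add: khintchine_const_def)
  obtain h0 where h0: "bij_betw h0 {0..<M} (UNIV::'n set)"
    using ex_bij_betw_nat_finite[of "UNIV::'n set"] dim by auto
  hence h: "bij_betw h0 {..<M} (UNIV::'n set)" by (simp add: atLeast0LessThan)
  define P where "P = PiE {..<M} (\<lambda>_. {-1, 1::real})"
  have fP: "finite P" unfolding P_def by (simp add: finite_PiE)
  have cP: "card P = 2^M" unfolding P_def by (simp add: card_PiE eval_nat_numeral)
  define a where "a j = (1/2^M) * (\<Sum>\<delta>\<in>P. cmod (cinner (vv h0 M \<delta>) (f j)))" for j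
  define b where "b j = (1/2^M) * (\<Sum>\<delta>\<in>P. cmod (cinner (xs j) (vv h0 M \<delta>)))" for j
  have ab: "K1^2 / M * (norm (f j) * norm (xs j)) \<le> a j * b j" if "j < N" for j
  proof -
    have 1: "K1 * norm (f j) / sqrt M \<le> a j"
      unfolding a_def P_def using avg[OF field K1 dim h] f_in that by auto
    have "cmod (cinner (xs j) (vv h0 M \<delta>)) = cmod (cinner (vv h0 M \<delta>) (xs j))" for \<delta>
      by (subst cinner_commute) simp
    hence 2: "K1 * norm (xs j) / sqrt M \<le> b j"
      unfolding b_def P_def using avg[OF field K1 dim h] xs_in that by auto
    have "K1^2 / M * (norm (f j) * norm (xs j)) = (K1 * norm (f j) / sqrt M) * (K1 * norm (xs j) / sqrt M)"
      using M by (simp add: power2_eq_square)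
    also have "\<dots> \<le> a j * b j"
    proof -
      have "0 \<le> K1 * norm (f j) / sqrt M" "0 \<le> K1 * norm (xs j) / sqrt M" using K1pos by auto
      thus ?thesis using 1 2 by (intro mult_mono) auto
    qed
    finally show ?thesis .
  qed
  have "K1^2 / M * (\<Sum>j<N. norm (f j) * norm (xs j)) \<le> (\<Sum>j<N. a j * b j)"
    unfolding sum_distrib_left using ab by (intro sum_mono) auto
  also have "(\<Sum>j<N. a j * b j) = (1/2^M)^2 * (\<Sum>j<N. \<Sum>\<delta>\<in>P. \<Sum>\<delta>'\<in>P.
      cmod (cinner (vv h0 M \<delta>) (f j)) * cmod (cinner (xs j) (vv h0 M \<delta>')))"
  proof -
    have "a j * b j = (1/2^M)^2 * (\<Sum>\<delta>\<in>P. \<Sum>\<delta>'\<in>P.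
      cmod (cinner (vv h0 M \<delta>) (f j)) * cmod (cinner (xs j) (vv h0 M \<delta>')))" for j
      unfolding a_def b_def sum_product[symmetric] by (simp add: power2_eq_square)
    thus ?thesis by (simp add: sum_distrib_left)
  qed
  also have "(\<Sum>j<N. \<Sum>\<delta>\<in>P. \<Sum>\<delta>'\<in>P.
      cmod (cinner (vv h0 M \<delta>) (f j)) * cmod (cinner (xs j) (vv h0 M \<delta>')))
    = (\<Sum>\<delta>\<in>P. \<Sum>j<N. \<Sum>\<delta>'\<in>P.
      cmod (cinner (vv h0 M \<delta>) (f j)) * cmod (cinner (xs j) (vv h0 M \<delta>')))"
    by (rule sum.swap)
  also have "\<dots> = (\<Sum>\<delta>\<in>P. \<Sum>\<delta>'\<in>P. \<Sum>j<N.
      cmod (cinner (vv h0 M \<delta>) (f j)) * cmod (cinner (xs j) (vv h0 M \<delta>')))"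
    by (intro sum.cong refl) (rule sum.swap)
  also have "\<dots> \<le> (\<Sum>\<delta>\<in>P. \<Sum>\<delta>'\<in>P. C)"
  proof (intro sum_mono)
    fix \<delta> \<delta>' assume d: "\<delta> \<in> P" "\<delta>' \<in> P"
    show "(\<Sum>j<N. cmod (cinner (vv h0 M \<delta>) (f j)) * cmod (cinner (xs j) (vv h0 M \<delta>'))) \<le> C"
      using align[OF field xs_in f_in hyp vv_in[OF field] vv_in[OF field]
          vv_norm[OF dim h] vv_norm[OF dim h]] d unfolding P_def by blast
  qed
  also have "(1/2^M)^2 * (\<Sum>\<delta>\<in>P. \<Sum>\<delta>'\<in>P. C) = C"
    using cP by (simp add: power2_eq_square)
  finally have "K1^2 / M * (\<Sum>j<N. norm (f j) * norm (xs j)) \<le> C" by simp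
  thus ?thesis using M by (simp add: field_simps)
qed

lemma num:
  fixes K1 C \<beta> A L :: real and M :: nat
  assumes K1: "K1 > 0" "K1 \<le> 1" and C: "C > 0" and b: "\<beta> > 0" and M: "M > 0"
    and L1: "L \<le> \<beta> * A / M" and L2: "A / M \<le> L" and A: "K1^2 * A \<le> M * C"
  shows "L \<le> 27 / 4 / K1^4 * \<beta>^2 * C"
proof -
  have R: "27 / 4 / K1^4 * \<beta>^2 * C > 0" using K1 C b by auto
  show ?thesis
  proof (cases "A \<le> 0")
    case True
    hence "\<beta> * A / M \<le> 0" using b M by (simp add: divide_nonpos_pos mult_nonneg_nonpos)
    thus ?thesis using L1 R by linarith
  next
    case False
    hence Ap: "A / M > 0" using M by simp
    have "A / M \<le> \<beta> * (A / M)" using L1 L2 by simp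
    hence b1: "\<beta> \<ge> 1" using Ap mult_le_cancel_right1[of "A/M" \<beta>] by auto
    have "A / M \<le> C / K1^2" using A K1 M by (simp add: field_simps)
    hence "L \<le> \<beta> * (C / K1^2)" using L1 b by (metis mult_left_mono less_imp_le order_trans times_divide_eq_right)
    also have "\<dots> \<le> \<beta>^2 * (C / K1^2)"
      using b1 C K1 by (intro mult_right_mono) (auto simp: power2_eq_square)
    also have "\<dots> \<le> \<beta>^2 * (C / K1^4)"
    proof -
      have "K1^4 \<le> K1^2" using K1 by (intro power_decreasing) auto
      hence "C / K1^2 \<le> C / K1^4" using K1 C by (intro divide_left_mono) auto
      thus ?thesis by (intro mult_left_mono) auto
    qed
    also have "\<dots> \<le> 27 / 4 / K1^4 * \<beta>^2 * C" using K1 C by (simp add: field_simps)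
    finally show ?thesis .
  qed
qed

lemma eig_bessel:
  fixes g :: "nat \<Rightarrow> complex^'n" and K1 C \<beta> :: real
  assumes dim: "CARD('n) = M" and K1: "K1 > 0" "K1 \<le> 1" and C: "C > 0" and b: "\<beta> > 0"
    and he: "has_ordered_eigenvalues K (frame_op g N) M lam"
    and lb: "lam 0 \<le> \<beta> / real M * (\<Sum>j<M. lam j)"
    and A: "K1^2 * (\<Sum>j<N. (norm (g j))^2) \<le> M * C"
  shows "bessel_bound K g N (27 / 4 / K1^4 * \<beta>^2 * C)"
proof -
  have M: "M > 0" using dim finite_UNIV_card_ge_0 by fastforce
  obtain e where ein: "\<forall>i<M. e i \<in> vecs K"
    and on: "\<forall>i<M. \<forall>k<M. cinner (e i) (e k) = (if i = k then 1 else 0)"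
    and eig: "\<forall>i<M. frame_op g N (e i) = complex_of_real (lam i) *s e i"
    and ord: "\<forall>i k. i \<le> k \<longrightarrow> k < M \<longrightarrow> lam k \<le> lam i"
    using he unfolding has_ordered_eigenvalues_def by blast
  have le0: "lam i \<le> lam 0" if "i < M" for i using ord that by auto
  have tr: "(\<Sum>i<M. lam i) = (\<Sum>j<N. (norm (g j))^2)" by (rule eig_trace[OF dim on eig])
  have avg: "(\<Sum>i<M. lam i) \<le> M * lam 0"
    using sum_mono[of "{..<M}" lam "\<lambda>_. lam 0"] le0 by simp
  have L: "lam 0 \<le> 27 / 4 / K1^4 * \<beta>^2 * C"
    by (rule num[OF K1 C b M, of _ "\<Sum>j<N. (norm (g j))^2"]) (use lb tr avg A M in \<open>auto simp: field_simps\<close>)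
  show ?thesis unfolding bessel_bound_def
  proof
    fix x :: "complex^'n" assume "x \<in> vecs K"
    have "complex_of_real ((norm x)^2) = (\<Sum>i<M. cinner x (e i) * cinner (e i) x)"
      using parseval[OF dim on, of x x] by (simp add: cinner_self)
    also have "\<dots> = complex_of_real (\<Sum>i<M. (cmod (cinner x (e i)))^2)"
      unfolding of_real_sum cmod_sq_cinner ..
    finally have nx: "(norm x)^2 = (\<Sum>i<M. (cmod (cinner x (e i)))^2)" using of_real_eq_iff by blast
    have "frame_sum g N x = (\<Sum>i<M. lam i * (cmod (cinner x (e i)))^2)" by (rule eig_sum[OF dim on eig])
    also have "\<dots> \<le> (\<Sum>i<M. lam 0 * (cmod (cinner x (e i)))^2)"
      using le0 by (intro sum_mono mult_right_mono) auto
    also have "\<dots> = lam 0 * (norm x)^2" by (simp add: nx sum_distrib_left)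
    also have "\<dots> \<le> 27 / 4 / K1^4 * \<beta>^2 * C * (norm x)^2" using L by (intro mult_right_mono) auto
    finally show "frame_sum g N x \<le> 27 / 4 / K1^4 * \<beta>^2 * C * (norm x)^2" .
  qed
qed

lemma cinner_axis: "cinner (axis b 1) v = cnj (v $ b)"
proof -
  have "(\<Sum>i\<in>UNIV. (if i = b then 1 else 0) * cnj (v $ i)) = (\<Sum>i\<in>UNIV. if i = b then cnj (v $ i) else 0)"
    by (intro sum.cong) auto
  thus ?thesis unfolding cinner_def axis_def by simp
qed

lemma frame_sum_axis: "(\<Sum>b\<in>UNIV. frame_sum g N (axis b 1)) = (\<Sum>j<N. (norm (g j))^2)"
  unfolding frame_sum_def cinner_axis norm_sq by (simp add: sum.swap[of _ UNIV])

lemma axis_norm: "norm (axis b (1::complex)) = 1"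
proof -
  have "(norm (axis b (1::complex)))^2 = 1"
  proof -
    have "(\<Sum>i\<in>UNIV. (cmod (if i = b then (1::complex) else 0))^2) = (\<Sum>i\<in>UNIV. if i = b then 1 else 0)"
      by (intro sum.cong) auto
    thus ?thesis unfolding norm_sq axis_def by simp
  qed
  thus ?thesis using norm_ge_zero[of "axis b (1::complex)"] by (simp add: power2_eq_1_iff)
qed

lemma axis_in: "K = \<real> \<or> K = UNIV \<Longrightarrow> axis b 1 \<in> vecs K"
  by (auto simp: vecs_def axis_def)

lemma frame_sum_scale: "frame_sum g N (c *\<^sub>R x) = c^2 * frame_sum g N x"
proof -
  have "cinner (c *\<^sub>R x) v = of_real c * cinner x v" for v
    unfolding cinner_def by (simp only: vector_scaleR_component) (simp add: sum_distrib_left scaleR_conv_of_real mult.assoc)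
  thus ?thesis unfolding frame_sum_def by (simp add: norm_mult power_mult_distrib sum_distrib_left)
qed

lemma frame_bessel:
  fixes f :: "nat \<Rightarrow> complex^'n" and K1 C \<beta> :: real
  assumes field: "K = \<real> \<or> K = UNIV"
    and dim: "CARD('n) = M" and K1: "K1 > 0" "K1 \<le> 1" and C: "C > 0" and b: "\<beta> > 0"
    and fr: "is_frame K f N" and cn: "condition_number K f N = \<beta>"
    and A: "K1^2 * (\<Sum>j<N. (norm (f j))^2) \<le> M * C"
  shows "bessel_bound K f N (27 / 4 / K1^4 * \<beta>^2 * C)"
proof -
  have M: "M > 0" using dim finite_UNIV_card_ge_0 by fastforce
  define S where "S = {frame_sum f N x | x. x \<in> vecs K \<and> norm x = 1}"
  obtain A' B where A': "A' > 0" and AB: "\<forall>x\<in>vecs K. A' * (norm x)^2 \<le> frame_sum f N x \<and> frame_sum f N x \<le> B * (norm x)^2"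
    using fr unfolding is_frame_def by blast
  have axS: "frame_sum f N (axis b 1) \<in> S" for b
    unfolding S_def using axis_in[OF field] axis_norm by blast
  have ne: "S \<noteq> {}" using axS by blast
  have bda: "bdd_above S" unfolding S_def bdd_above_def using AB by force
  have bdb: "bdd_below S" unfolding S_def bdd_below_def using AB by force
  define U where "U = Sup S"
  define L where "L = Inf S"
  have LA: "A' \<le> L" unfolding L_def S_def
    by (rule cInf_greatest) (use ne AB in \<open>auto simp: S_def\<close>)
  have Lpos: "L > 0" using LA A' by simp
  have axU: "frame_sum f N (axis b 1) \<le> U" for b unfolding U_def using axS bda by (rule cSup_upper)
  have axL: "L \<le> frame_sum f N (axis b 1)" for b unfolding L_def using axS bdb by (rule cInf_lower)
  have "U / L = \<beta>" using cn unfolding condition_number_def opt_upper_bound_def opt_lower_bound_def U_def L_def S_def .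
  hence UL: "U = \<beta> * L" using Lpos by (simp add: field_simps)
  have sumA: "(\<Sum>b\<in>UNIV. frame_sum f N (axis b 1)) = (\<Sum>j<N. (norm (f j))^2)" by (rule frame_sum_axis)
  have "M * L \<le> (\<Sum>j<N. (norm (f j))^2)"
    using sum_mono[of UNIV "\<lambda>_. L" "\<lambda>b. frame_sum f N (axis b 1)"] axL sumA dim by simp
  hence L1: "U \<le> \<beta> * (\<Sum>j<N. (norm (f j))^2) / M" using UL b M by (simp add: field_simps)
  have "(\<Sum>j<N. (norm (f j))^2) \<le> M * U"
    using sum_mono[of UNIV "\<lambda>b. frame_sum f N (axis b 1)" "\<lambda>_. U"] axU sumA dim by simp
  hence L2: "(\<Sum>j<N. (norm (f j))^2) / M \<le> U" using M by (simp add: field_simps)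
  have Ub: "U \<le> 27 / 4 / K1^4 * \<beta>^2 * C" by (rule num[OF K1 C b M L1 L2 A])
  show ?thesis unfolding bessel_bound_def
  proof
    fix x :: "complex^'n" assume x: "x \<in> vecs K"
    have "frame_sum f N x \<le> U * (norm x)^2"
    proof (cases "x = 0")
      case True thus ?thesis by (simp add: frame_sum_def cinner_def)
    next
      case False
      hence nx: "norm x > 0" by simp
      define u where "u = (1 / norm x) *\<^sub>R x"
      have "u \<in> vecs K" using x field unfolding u_def vecs_def
        by (auto simp only: vector_scaleR_component) (auto simp: scaleR_conv_of_real)
      moreover have "norm u = 1" using nx by (simp add: u_def)
      ultimately have "frame_sum f N u \<in> S" unfolding S_def by blast
      hence "frame_sum f N u \<le> U" unfolding U_def using bda by (rule cSup_upper)
      moreover have "frame_sum f N u = frame_sum f N x / (norm x)^2"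
        unfolding u_def frame_sum_scale by (simp add: power_divide)
      ultimately show ?thesis using nx by (simp add: field_simps)
    qed
    also have "\<dots> \<le> 27 / 4 / K1^4 * \<beta>^2 * C * (norm x)^2" using Ub by (intro mult_right_mono) auto
    finally show "frame_sum f N x \<le> 27 / 4 / K1^4 * \<beta>^2 * C * (norm x)^2" .
  qed
qed

lemma K1_le1: assumes field: "K = \<real> \<or> K = UNIV" and K1: "khintchine_const K K1" shows "K1 \<le> 1"
proof -
  define P where "P = PiE {..<1::nat} (\<lambda>_. {-1, 1::real})"
  have F: "\<forall>(n::nat) (a::nat \<Rightarrow> complex). (\<forall>j<n. a j \<in> K) \<longrightarrow>
        (1 / 2^n) * (\<Sum>\<delta>\<in>PiE {..<n} (\<lambda>_. {-1, 1::real}). cmod (\<Sum>j<n. of_real (\<delta> j) * a j))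
          \<ge> K1 * sqrt (\<Sum>j<n. (cmod (a j))^2)" using K1 unfolding khintchine_const_def by (rule conjunct2)
  have prem: "\<And>j::nat. j < 1 \<Longrightarrow> (1::complex) \<in> K" using field by auto
  note G = F[rule_format, of 1 "\<lambda>_. 1::complex", OF prem]
  have S: "(\<Sum>\<delta>\<in>P. cmod (\<Sum>j<1. of_real (\<delta> j) * (1::complex))) = (\<Sum>\<delta>\<in>P. 1)"
  proof (intro sum.cong refl)
    fix \<delta> assume "\<delta> \<in> P"
    hence "\<delta> 0 \<in> {-1,1}" unfolding P_def by auto
    thus "cmod (\<Sum>j<1. of_real (\<delta> j) * (1::complex)) = 1" by auto
  qed
  have c: "card P = 2" unfolding P_def by (simp add: card_PiE)
  from G have "K1 * 1 \<le> 1 / 2 * (\<Sum>\<delta>\<in>P. cmod (\<Sum>j<1. of_real (\<delta> j) * (1::complex)))"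
    unfolding P_def by simp
  also have "\<dots> = 1" unfolding S using c by simp
  finally show ?thesis by simp
qed

theorem theorem4p6:
  fixes K :: "complex set" and C \<beta> K1 :: real and N M :: nat
    and xs f :: "nat \<Rightarrow> complex^'n"
  assumes field: "K = \<real> \<or> K = UNIV"
    and K1: "khintchine_const K K1"
    and Cpos: "C > 0" and betapos: "\<beta> > 0"
    and dim: "CARD('n) = M"
    and xs_in: "\<forall>j<N. xs j \<in> vecs K" and f_in: "\<forall>j<N. f j \<in> vecs K"
    and norms: "\<forall>j<N. norm (xs j) = norm (f j)"
    and hyp: "\<forall>x\<in>vecs K. \<forall>\<epsilon>::nat \<Rightarrow> complex. (\<forall>j<N. \<epsilon> j \<in> K \<and> cmod (\<epsilon> j) = 1) \<longrightarrow>
               norm (\<Sum>j<N. (\<epsilon> j * cinner x (f j)) *s xs j) \<le> C * norm x"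
  shows
    "(\<forall>lam. has_ordered_eigenvalues K (frame_op f N) M lam \<and>
            lam 0 \<le> \<beta> / real M * (\<Sum>j<M. lam j)
        \<longrightarrow> bessel_bound K f N (27 / 4 / K1^4 * \<beta>^2 * C))
     \<and> (is_frame K f N \<and> condition_number K f N = \<beta>
        \<longrightarrow> bessel_bound K f N (27 / 4 / K1^4 * \<beta>^2 * C))
     \<and> (tight_frame K f N \<longrightarrow> bessel_bound K f N (27 / 4 / K1^4 * C))
     \<and> (\<forall>lam. has_ordered_eigenvalues K (frame_op xs N) M lam \<and>
            lam 0 \<le> \<beta> / real M * (\<Sum>j<M. lam j)
        \<longrightarrow> bessel_bound K xs N (27 / 4 / K1^4 * \<beta>^2 * C))"
proof -
  have K1p: "K1 > 0" using K1 by (simp add: khintchine_const_def)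
  have K1l: "K1 \<le> 1" by (rule K1_le1[OF field K1])
  have k: "K1^2 * (\<Sum>j<N. norm (f j) * norm (xs j)) \<le> real M * C"
    by (rule key[OF field K1 dim xs_in f_in hyp])
  have Af: "K1^2 * (\<Sum>j<N. (norm (f j))^2) \<le> real M * C"
  proof -
    have "(\<Sum>j<N. norm (f j) * norm (xs j)) = (\<Sum>j<N. (norm (f j))^2)"
      using norms by (intro sum.cong refl) (simp add: power2_eq_square)
    thus ?thesis using k by simp
  qed
  have Ax: "K1^2 * (\<Sum>j<N. (norm (xs j))^2) \<le> real M * C"
  proof -
    have "(\<Sum>j<N. norm (f j) * norm (xs j)) = (\<Sum>j<N. (norm (xs j))^2)"
      using norms by (intro sum.cong refl) (simp add: power2_eq_square)
    thus ?thesis using k by simp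
  qed
  have one: "0 < (1::real)" by simp
  show ?thesis
  proof (intro conjI allI impI)
    fix lam assume "has_ordered_eigenvalues K (frame_op f N) M lam \<and> lam 0 \<le> \<beta> / real M * (\<Sum>j<M. lam j)"
    thus "bessel_bound K f N (27 / 4 / K1^4 * \<beta>^2 * C)"
      using eig_bessel[OF dim K1p K1l Cpos betapos _ _ Af] by blast
  next
    assume "is_frame K f N \<and> condition_number K f N = \<beta>"
    thus "bessel_bound K f N (27 / 4 / K1^4 * \<beta>^2 * C)"
      using frame_bessel[OF field dim K1p K1l Cpos betapos _ _ Af] by blast
  next
    assume "tight_frame K f N"
    hence "bessel_bound K f N (27 / 4 / K1^4 * 1^2 * C)"
      using frame_bessel[OF field dim K1p K1l Cpos one _ _ Af] unfolding tight_frame_def by blast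
    thus "bessel_bound K f N (27 / 4 / K1^4 * C)" by simp
  next
    fix lam assume "has_ordered_eigenvalues K (frame_op xs N) M lam \<and> lam 0 \<le> \<beta> / real M * (\<Sum>j<M. lam j)"
    thus "bessel_bound K xs N (27 / 4 / K1^4 * \<beta>^2 * C)"
      using eig_bessel[OF dim K1p K1l Cpos betapos _ _ Ax] by blast
  qed
qed

end
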